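(* For any $\mathbf z\in\mathrm{Sym}^k\mathbb R$, there is a unique decomposition $\mathbf z=\mathbf z_1+\dots+\mathbf z_m$ such that each $\mathbf z_i$ is well contained in $B_{\mathbf z_i}$, and the boxes $B_{\mathbf z_i}$ are pairwise disjoint and ordered $B_{\mathbf z_1}<B_{\mathbf z_2}<\dots<B_{\mathbf z_m}$.
   Context: Fix $b>0$. For $x\in\mathbb R$ and $k\ge1$, $B_k(x)=[x-kb,x+kb]$. For a nonempty $\mathbf z\in\mathrm{Sym}^n\mathbb R$ (unordered tuple with multiplicity, $|\mathbf z|=n$, $+$ union with multiplicity), $c(\mathbf z)$ is the average of its points and $B_{\mathbf z}=B_{|\mathbf z|}(c(\mathbf z))$. Writing $\mathbf z=(x_1\le\dots\le x_n)$, a consecutive subset is $\{x_p,x_{p+1},\dots,x_q\}$. $\mathbf z$ is well contained in $B_{\mathbf z}$ if $B_{\mathbf z'}\subset B_{\mathbf z}$ for every consecutive subset $\mathbf z'\subset\mathbf z$. For intervals, $B<B'$ means every point of $B$ is less than every point of $B'$. *)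

theory Defs
  imports Complex_Main "HOL-Library.Multiset"
begin

text \<open>Points of Sym^n R are finite multisets of reals; + is multiset union.\<close>

definition center :: "real multiset \<Rightarrow> real" where
  "center z = sum_mset z / real (size z)"

definition Bk :: "real \<Rightarrow> nat \<Rightarrow> real \<Rightarrow> real set" where
  "Bk b k x = {x - real k * b .. x + real k * b}"

definition Bz :: "real \<Rightarrow> real multiset \<Rightarrow> real set" where
  "Bz b z = Bk b (size z) (center z)"

text \<open>Consecutive subsets {x_p,...,x_q} (p \<le> q) of z = (x_1 \<le> ... \<le> x_n).\<close>
definition consecutive_subsets :: "real multiset \<Rightarrow> real multiset set" where
  "consecutive_subsets z =
     {mset (take (q - p + 1) (drop p (sorted_list_of_multiset z))) | p q. p \<le> q \<and> q < size z}"

definition well_contained :: "real \<Rightarrow> real multiset \<Rightarrow> bool" where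
  "well_contained b z \<longleftrightarrow> (\<forall>z' \<in> consecutive_subsets z. Bz b z' \<subseteq> Bz b z)"

definition interval_less :: "real set \<Rightarrow> real set \<Rightarrow> bool" where
  "interval_less B B' \<longleftrightarrow> (\<forall>x\<in>B. \<forall>y\<in>B'. x < y)"

end

theory Submission
  imports Defs
begin

lemma mean_app:
  fixes S1 S2 n1 n2 :: real
  assumes "n1 > 0" "n2 > 0"
  shows "(S1+S2)/(n1+n2) = S1/n1 + n2*((S2/n2 - S1/n1)/(n1+n2))"
proof -
  have p: "n1 + n2 > 0" using assms by simp
  have x: "S2/n2 - S1/n1 = (S2*n1 - S1*n2)/(n1*n2)"
    using assms by (simp add: field_simps)
  have nz: "n1*(n1+n2) \<noteq> 0" "n1*n2 \<noteq> 0" using assms p by auto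
  have "n2*((S2/n2 - S1/n1)/(n1+n2)) = (S2*n1 - S1*n2)/(n1*(n1+n2))"
    unfolding x using assms p nz by (simp add: divide_divide_eq_left)
  moreover have "S1/n1 + (S2*n1 - S1*n2)/(n1*(n1+n2)) = (S1+S2)/(n1+n2)"
  proof -
    have "S1/n1 = (S1*(n1+n2))/(n1*(n1+n2))" using p assms by simp
    then have "S1/n1 + (S2*n1 - S1*n2)/(n1*(n1+n2)) = (S1*(n1+n2) + (S2*n1 - S1*n2))/(n1*(n1+n2))"
      by (simp add: add_divide_distrib)
    also have "S1*(n1+n2) + (S2*n1 - S1*n2) = n1*(S1+S2)" by (simp add: algebra_simps)
    also have "n1*(S1+S2)/(n1*(n1+n2)) = (S1+S2)/(n1+n2)" using assms by simp
    finally show ?thesis .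
  qed
  ultimately show ?thesis by simp
qed

lemma alg_F:
  fixes S1 S2 Sa Sb n1 n2 na nb b :: real
  assumes pos: "na > 0" "nb > 0" "na \<le> n1" "nb \<le> n2" "b > 0"
    and hA: "Sa/na - na*b \<ge> S1/n1 - n1*b"
    and hB: "Sb/nb - nb*b \<ge> S2/n2 - n2*b"
    and ord: "S1/n1 \<le> S2/n2"
    and ov: "S2/n2 - n2*b \<le> S1/n1 + n1*b"
  shows "(Sa+Sb)/(na+nb) - (na+nb)*b \<ge> (S1+S2)/(n1+n2) - (n1+n2)*b"
proof -
  define c1 where "c1 = S1/n1"
  define c2 where "c2 = S2/n2"
  define n where "n = n1 + n2"
  define e where "e = (c2 - c1)/n"
  define t where "t = (S1+S2)/(n1+n2) - (n1+n2)*b"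
  have n1p: "n1 > 0" "n2 > 0" using pos by auto
  have np: "n > 0" using n1p n_def by auto
  have t_eq: "t = c1 + n2*e - n*b" unfolding t_def c1_def c2_def e_def n_def
    using mean_app[OF n1p] by simp
  have e0: "e \<ge> 0" using ord np unfolding e_def c1_def c2_def by simp
  have eb: "e \<le> b"
  proof -
    have "c2 - c1 \<le> n*b" using ov unfolding c1_def c2_def n_def by (simp add: algebra_simps)
    then show ?thesis using np unfolding e_def by (simp add: divide_le_eq mult.commute)
  qed
  have Sa: "Sa \<ge> na*(c1 - n1*b + na*b)"
  proof -
    have "Sa/na \<ge> c1 - n1*b + na*b" using hA unfolding c1_def by simp
    then show ?thesis using pos(1) by (simp add: le_divide_eq mult.commute)
  qed
  have Sb: "Sb \<ge> nb*(c2 - n2*b + nb*b)"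
  proof -
    have "Sb/nb \<ge> c2 - n2*b + nb*b" using hB unfolding c2_def by simp
    then show ?thesis using pos(2) by (simp add: le_divide_eq mult.commute)
  qed
  have t1: "c1 - n1*b - t = n2*(b - e)" using t_eq n_def by (simp add: algebra_simps)
  have t2: "c2 - n2*b - t = n1*(b + e)"
  proof -
    have "c2 - c1 = n*e" unfolding e_def using np by simp
    then show ?thesis using t_eq n_def by (simp add: algebra_simps)
  qed
  have key: "na*(n2*(b-e)) + nb*(n1*(b+e)) \<ge> 2*na*nb*b"
  proof -
    have "na*(n2*(b-e)) \<ge> na*(nb*(b-e))" using pos eb e0
      by (intro mult_left_mono mult_right_mono) auto
    moreover have "nb*(n1*(b+e)) \<ge> nb*(na*(b+e))" using pos eb e0
      by (intro mult_left_mono mult_right_mono) auto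
    moreover have "na*(nb*(b-e)) + nb*(na*(b+e)) = 2*na*nb*b" by (simp add: algebra_simps)
    ultimately show ?thesis by linarith
  qed
  have "Sa + Sb \<ge> (na+nb)*(t + (na+nb)*b)"
  proof -
    have "na*(c1 - n1*b + na*b) + nb*(c2 - n2*b + nb*b) - (na+nb)*(t + (na+nb)*b)
        = na*(c1 - n1*b - t) + nb*(c2 - n2*b - t) - 2*na*nb*b"
      by (simp add: algebra_simps power2_eq_square)
    also have "\<dots> \<ge> 0" using key t1 t2 by simp
    finally show ?thesis using Sa Sb by linarith
  qed
  then have "(Sa+Sb)/(na+nb) \<ge> t + (na+nb)*b" using pos by (simp add: le_divide_eq mult.commute)
  then show ?thesis unfolding t_def by simp
qed

lemma alg_G:
  fixes S1 S2 Sa Sb n1 n2 na nb b :: real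
  assumes pos: "na > 0" "nb > 0" "na \<le> n1" "nb \<le> n2" "b > 0"
    and hA: "Sa/na + na*b \<le> S1/n1 + n1*b"
    and hB: "Sb/nb + nb*b \<le> S2/n2 + n2*b"
    and ord: "S1/n1 \<le> S2/n2"
    and ov: "S2/n2 - n2*b \<le> S1/n1 + n1*b"
  shows "(Sa+Sb)/(na+nb) + (na+nb)*b \<le> (S1+S2)/(n1+n2) + (n1+n2)*b"
proof -
  have "(-Sb + -Sa)/(nb+na) - (nb+na)*b \<ge> (-S2 + -S1)/(n2+n1) - (n2+n1)*b"
    by (rule alg_F) (use pos hA hB ord ov in auto)
  moreover have "(-Sb + -Sa)/(nb+na) = -((Sa+Sb)/(na+nb))"
    by (simp add: add.commute minus_divide_left)
  moreover have "(-S2 + -S1)/(n2+n1) = -((S1+S2)/(n1+n2))"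
    by (simp add: add.commute minus_divide_left)
  ultimately show ?thesis by (simp add: algebra_simps)
qed

lemma alg_simple:
  fixes S1 S2 n1 n2 b :: real
  assumes "n1 > 0" "n2 > 0" "b > 0"
    and ord: "S1/n1 \<le> S2/n2"
    and ov: "S2/n2 - n2*b \<le> S1/n1 + n1*b"
  shows "(S1+S2)/(n1+n2) - (n1+n2)*b \<le> S1/n1 - n1*b"
    and "(S1+S2)/(n1+n2) - (n1+n2)*b \<le> S2/n2 - n2*b"
    and "S1/n1 + n1*b \<le> (S1+S2)/(n1+n2) + (n1+n2)*b"
    and "S2/n2 + n2*b \<le> (S1+S2)/(n1+n2) + (n1+n2)*b"
proof -
  define e where "e = (S2/n2 - S1/n1)/(n1+n2)"
  have m: "(S1+S2)/(n1+n2) = S1/n1 + n2*e" unfolding e_def using mean_app assms by simp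
  have np: "n1+n2 > 0" using assms by simp
  have d: "S2/n2 - S1/n1 = (n1+n2)*e" unfolding e_def using np by simp
  have e0: "e \<ge> 0" using ord np unfolding e_def by simp
  have eb: "e \<le> b"
  proof -
    have "(n1+n2)*e \<le> (n1+n2)*b" using d ov by (simp add: algebra_simps)
    then show ?thesis using np by simp
  qed
  have a: "n2*e \<le> n2*b" "n1*e \<le> n1*b" using eb assms by (auto intro: mult_left_mono)
  have "0 \<le> n2*e" "0 \<le> n1 * e" using e0 assms by auto
  then show "(S1+S2)/(n1+n2) - (n1+n2)*b \<le> S1/n1 - n1*b"
    and "(S1+S2)/(n1+n2) - (n1+n2)*b \<le> S2/n2 - n2*b"
    and "S1/n1 + n1*b \<le> (S1+S2)/(n1+n2) + (n1+n2)*b"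
    and "S2/n2 + n2*b \<le> (S1+S2)/(n1+n2) + (n1+n2)*b"
    using m d a assms by (simp_all add: algebra_simps)
qed

lemma alg_A:
  fixes S1 S2 n1 n2 b :: real
  assumes "n1 > 0" "n2 > 0"
    and sep: "S1/n1 + n1*b < S2/n2 - n2*b"
  shows "(S1+S2)/(n1+n2) - (n1+n2)*b > S1/n1 - n1*b"
proof -
  define e where "e = (S2/n2 - S1/n1)/(n1+n2)"
  have m: "(S1+S2)/(n1+n2) = S1/n1 + n2*e" unfolding e_def using mean_app assms by simp
  have np: "n1+n2 > 0" using assms by simp
  have d: "S2/n2 - S1/n1 = (n1+n2)*e" unfolding e_def using np by simp
  have "(n1+n2)*b < (n1+n2)*e" using d sep by (simp add: algebra_simps)
  then have "b < e" using np by simp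
  then have "n2*b < n2*e" using assms by simp
  then show ?thesis using m by (simp add: algebra_simps)
qed


definition FF :: "real \<Rightarrow> real list \<Rightarrow> real" where
  "FF b w = sum_list w / real (length w) - real (length w) * b"
definition GG :: "real \<Rightarrow> real list \<Rightarrow> real" where
  "GG b w = sum_list w / real (length w) + real (length w) * b"
definition wcl :: "real \<Rightarrow> real list \<Rightarrow> bool" where
  "wcl b w \<longleftrightarrow> w \<noteq> [] \<and> (\<forall>a s c. w = a @ s @ c \<and> s \<noteq> [] \<longrightarrow> FF b w \<le> FF b s \<and> GG b s \<le> GG b w)"
definition valid :: "real \<Rightarrow> real list list \<Rightarrow> bool" where
  "valid b zs \<longleftrightarrow> (\<forall>w\<in>set zs. wcl b w) \<and> sorted_wrt (\<lambda>u v. GG b u < FF b v) zs"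

lemma FF_le_GG: "b \<ge> 0 \<Longrightarrow> FF b w \<le> GG b w"
  unfolding FF_def GG_def by simp

lemma wclI: "w \<noteq> [] \<Longrightarrow> (\<And>a s c. w = a @ s @ c \<Longrightarrow> s \<noteq> [] \<Longrightarrow> FF b w \<le> FF b s \<and> GG b s \<le> GG b w) \<Longrightarrow> wcl b w"
  unfolding wcl_def by blast

lemma wclD: "wcl b w \<Longrightarrow> w = a @ s @ c \<Longrightarrow> s \<noteq> [] \<Longrightarrow> FF b w \<le> FF b s \<and> GG b s \<le> GG b w"
  unfolding wcl_def by blast

lemma wcl_single: "wcl b [x]"
proof (rule wclI)
  show "[x] \<noteq> []" by simp
  fix a s c assume h: "[x] = a @ s @ c" "s \<noteq> []"
  then have "s = [x]" by (cases a; cases s) auto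
  then show "FF b [x] \<le> FF b s \<and> GG b s \<le> GG b [x]" by simp
qed

lemma wcl_mem: "b \<ge> 0 \<Longrightarrow> wcl b w \<Longrightarrow> x \<in> set w \<Longrightarrow> FF b w \<le> x \<and> x \<le> GG b w"
proof -
  assume b: "b \<ge> 0" and w: "wcl b w" and x: "x \<in> set w"
  obtain a c where "w = a @ [x] @ c" using split_list[OF x] by auto
  from wclD[OF w this] have "FF b w \<le> FF b [x]" "GG b [x] \<le> GG b w" by auto
  then show ?thesis using b unfolding FF_def GG_def by auto
qed

lemma mean_le:
  fixes u v :: "real list"
  assumes "u \<noteq> []" "v \<noteq> []" "\<forall>x\<in>set u. \<forall>y\<in>set v. x \<le> y"
  shows "sum_list u / real (length u) \<le> sum_list v / real (length v)"
proof -
  define m where "m = Min (set v)"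
  have mv: "\<forall>y\<in>set v. m \<le> y" unfolding m_def by simp
  have mu: "\<forall>x\<in>set u. x \<le> m" unfolding m_def using assms by simp
  have "sum_list u \<le> (\<Sum>x\<leftarrow>u. m)" using sum_list_mono[of u "\<lambda>x. x" "\<lambda>x. m"] mu by simp
  then have 1: "sum_list u \<le> real (length u) * m" by (simp add: sum_list_triv)
  have "(\<Sum>x\<leftarrow>v. m) \<le> sum_list v" using sum_list_mono[of v "\<lambda>x. m" "\<lambda>x. x"] mv by simp
  then have 2: "real (length v) * m \<le> sum_list v" by (simp add: sum_list_triv)
  have "sum_list u / real (length u) \<le> m" using 1 assms by (simp add: divide_le_eq mult.commute)
  also have "m \<le> sum_list v / real (length v)" using 2 assms by (simp add: le_divide_eq mult.commute)
  finally show ?thesis .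
qed

lemma split3:
  assumes "u @ v = a @ s @ c"
  shows "(\<exists>c'. u = a @ s @ c') \<or> (\<exists>a'. v = a' @ s @ c) \<or>
         (\<exists>s1 s2. s = s1 @ s2 \<and> s1 \<noteq> [] \<and> s2 \<noteq> [] \<and> u = a @ s1 \<and> v = s2 @ c)"
proof -
  from assms obtain us where
    "(u = a @ us \<and> us @ v = s @ c) \<or> (u @ us = a \<and> v = us @ s @ c)"
    unfolding append_eq_append_conv2 by blast
  then show ?thesis
  proof
    assume h: "u = a @ us \<and> us @ v = s @ c"
    then obtain vs where "(us = s @ vs \<and> vs @ v = c) \<or> (us @ vs = s \<and> v = vs @ c)"
      unfolding append_eq_append_conv2 by blast
    then show ?thesis
    proof
      assume "us = s @ vs \<and> vs @ v = c" then show ?thesis using h by auto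
    next
      assume h2: "us @ vs = s \<and> v = vs @ c"
      show ?thesis
      proof (cases "us = []")
        case True then show ?thesis using h h2 by auto
      next
        case False
        show ?thesis
        proof (cases "vs = []")
          case True then show ?thesis using h h2 by auto
        next
          case False2: False
          then show ?thesis using h h2 False by blast
        qed
      qed
    qed
  next
    assume "u @ us = a \<and> v = us @ s @ c" then show ?thesis by auto
  qed
qed

lemma FF_app: "FF b (u @ v) = (sum_list u + sum_list v)/(real (length u) + real (length v)) - (real (length u) + real (length v))*b"
  unfolding FF_def by simp
lemma GG_app: "GG b (u @ v) = (sum_list u + sum_list v)/(real (length u) + real (length v)) + (real (length u) + real (length v))*b"
  unfolding GG_def by simp

lemma merge_wcl:
  assumes b: "b > 0" and u: "wcl b u" and v: "wcl b v"
    and ord: "\<forall>x\<in>set u. \<forall>y\<in>set v. x \<le> y" and ov: "FF b v \<le> GG b u"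
  shows "wcl b (u @ v)"
proof -
  have un: "u \<noteq> []" and vn: "v \<noteq> []" using u v unfolding wcl_def by auto
  have n1: "real (length u) > 0" and n2: "real (length v) > 0" using un vn by auto
  have o: "sum_list u / real (length u) \<le> sum_list v / real (length v)"
    using mean_le[OF un vn ord] .
  have ov': "sum_list v / real (length v) - real (length v) * b \<le> sum_list u / real (length u) + real (length u) * b"
    using ov unfolding FF_def GG_def by simp
  note S = alg_simple[OF n1 n2 b o ov']
  have s1: "FF b (u@v) \<le> FF b u" "FF b (u@v) \<le> FF b v" "GG b u \<le> GG b (u@v)" "GG b v \<le> GG b (u@v)"
    using S unfolding FF_app GG_app by (auto simp: FF_def GG_def)
  show ?thesis
  proof (rule wclI)
    show "u @ v \<noteq> []" using un by simp
    fix a s c assume h: "u @ v = a @ s @ c" "s \<noteq> []"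
    from split3[of u v a s c] h consider (A) c' where "u = a @ s @ c'" | (B) a' where "v = a' @ s @ c"
      | (C) s1 s2 where "s = s1 @ s2" "s1 \<noteq> []" "s2 \<noteq> []" "u = a @ s1" "v = s2 @ c" by blast
    then show "FF b (u @ v) \<le> FF b s \<and> GG b s \<le> GG b (u @ v)"
    proof cases
      case A then show ?thesis using wclD[OF u A] h s1 by linarith
    next
      case B then show ?thesis using wclD[OF v B] h s1 by linarith
    next
      case C
      have hu: "FF b u \<le> FF b s1 \<and> GG b s1 \<le> GG b u" using wclD[of b u a s1 "[]"] u C by simp
      have hv: "FF b v \<le> FF b s2 \<and> GG b s2 \<le> GG b v" using wclD[of b v "[]" s2 c] v C by simp
      have p: "real (length s1) > 0" "real (length s2) > 0"
        "real (length s1) \<le> real (length u)" "real (length s2) \<le> real (length v)"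
        using C by auto
      have "FF b (s1@s2) \<ge> FF b (u@v)"
        unfolding FF_app
        by (rule alg_F[OF p b _ _ o ov']) (use hu hv in \<open>auto simp: FF_def\<close>)
      moreover have "GG b (s1@s2) \<le> GG b (u@v)"
        unfolding GG_app
        by (rule alg_G[OF p b _ _ o ov']) (use hu hv in \<open>auto simp: GG_def\<close>)
      ultimately show ?thesis using C by simp
    qed
  qed
qed


lemma transp_GF: assumes "b \<ge> 0" shows "transp (\<lambda>u v. GG b u < FF b v)"
proof (rule transpI)
  fix x y z assume "GG b x < FF b y" "GG b y < FF b z"
  moreover have "FF b y \<le> GG b y" using FF_le_GG assms by blast
  ultimately show "GG b x < FF b z" by linarith
qed

lemma exist_list:
  assumes b: "b > 0"
  shows "sorted (concat zs) \<Longrightarrow> \<forall>w\<in>set zs. wcl b w \<Longrightarrow>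
         \<exists>ys. concat ys = concat zs \<and> valid b ys"
proof (induction "length zs" arbitrary: zs rule: less_induct)
  case less
  show ?case
  proof (cases "\<exists>as u v cs. zs = as @ u # v # cs \<and> FF b v \<le> GG b u")
    case True
    then obtain as u v cs where z: "zs = as @ u # v # cs" and o: "FF b v \<le> GG b u" by blast
    define zs' where "zs' = as @ (u @ v) # cs"
    have len: "length zs' < length zs" unfolding zs'_def z by simp
    have cc: "concat zs' = concat zs" unfolding zs'_def z by simp
    have srt: "sorted (concat as @ u @ v @ concat cs)" using less.prems(1) z by simp
    then have ord: "\<forall>x\<in>set u. \<forall>y\<in>set v. x \<le> y" by (simp add: sorted_append)
    have wu: "wcl b u" and wv: "wcl b v" using less.prems(2) z by auto
    have "wcl b (u @ v)" by (rule merge_wcl[OF b wu wv ord o])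
    then have "\<forall>w\<in>set zs'. wcl b w" using less.prems(2) z unfolding zs'_def by auto
    moreover have "sorted (concat zs')" using cc less.prems(1) by simp
    ultimately obtain ys where "concat ys = concat zs' \<and> valid b ys"
      using less.hyps[OF len] by blast
    then show ?thesis using cc by auto
  next
    case False
    have tr: "transp (\<lambda>u v. GG b u < FF b v)" using transp_GF[of b] b by simp
    have "sorted_wrt (\<lambda>u v. GG b u < FF b v) zs"
      unfolding sorted_wrt_iff_nth_Suc_transp[OF tr]
    proof (intro allI impI)
      fix i assume i: "Suc i < length zs"
      have "zs = take i zs @ zs ! i # zs ! Suc i # drop (Suc (Suc i)) zs"
        using i by (simp add: Cons_nth_drop_Suc)
      then show "GG b (zs ! i) < FF b (zs ! Suc i)" using False by (meson not_le)
    qed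
    then show ?thesis using less.prems(2) unfolding valid_def by blast
  qed
qed

lemma lemV:
  assumes b: "b > 0"
  shows "\<forall>w\<in>set (v # vs). wcl b w \<Longrightarrow> sorted_wrt (\<lambda>u v. GG b u < FF b v) (v # vs) \<Longrightarrow>
     concat (v # vs) = r @ t \<Longrightarrow> r \<noteq> [] \<Longrightarrow> FF b v \<le> FF b r"
proof (induction vs arbitrary: v r t)
  case Nil
  then have "v = [] @ r @ t" by simp
  then show ?case using wclD[of b v "[]" r t] Nil by simp
next
  case (Cons v2 vs)
  have wv: "wcl b v" using Cons.prems by simp
  from Cons.prems(3) have "v @ concat (v2 # vs) = r @ t" by simp
  then obtain us where
    "(v = r @ us \<and> us @ concat (v2 # vs) = t) \<or> (v @ us = r \<and> concat (v2 # vs) = us @ t)"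
    unfolding append_eq_append_conv2 by blast
  then show ?case
  proof
    assume "v = r @ us \<and> us @ concat (v2 # vs) = t"
    then have "v = [] @ r @ us" by simp
    then show ?thesis using wclD[OF wv _ Cons.prems(4)] by blast
  next
    assume h: "v @ us = r \<and> concat (v2 # vs) = us @ t"
    show ?thesis
    proof (cases "us = []")
      case True then show ?thesis using h by simp
    next
      case False
      have "FF b v2 \<le> FF b us"
        using Cons.IH[of v2 us t] Cons.prems h False by simp
      moreover have "GG b v < FF b v2" using Cons.prems(2) by simp
      ultimately have sep: "GG b v < FF b us" by simp
      have vn: "v \<noteq> []" using wv unfolding wcl_def by simp
      have "FF b (v @ us) > FF b v"
        unfolding FF_app FF_def[of b v]
        by (rule alg_A) (use vn False sep in \<open>auto simp: FF_def GG_def\<close>)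
      then show ?thesis using h by simp
    qed
  qed
qed

lemma not_shorter:
  assumes b: "b > 0" and zv: "valid b (u # zs)" and yv: "valid b (w # ys)"
    and eq: "u @ concat zs = w @ concat ys"
  shows "\<not> length u < length w"
proof
  assume lt: "length u < length w"
  from eq obtain us where
    d: "(u = w @ us \<and> us @ concat zs = concat ys) \<or> (u @ us = w \<and> concat zs = us @ concat ys)"
    unfolding append_eq_append_conv2 by blast
  have h: "u @ us = w" "concat zs = us @ concat ys"
  proof -
    have "\<not> (u = w @ us)"
    proof
      assume "u = w @ us"
      then have "length w \<le> length u" by simp
      then show False using lt by simp
    qed
    then show "u @ us = w" "concat zs = us @ concat ys" using d by blast+
  qed
  have usn: "us \<noteq> []" using h(1) lt by auto
  have "zs \<noteq> []" using h(2) usn by auto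
  then obtain v vs where zs: "zs = v # vs" by (cases zs) auto
  have w1: "\<forall>x\<in>set (v # vs). wcl b x" using zv zs unfolding valid_def by simp
  have w2: "sorted_wrt (\<lambda>u v. GG b u < FF b v) (v # vs)" using zv zs unfolding valid_def by simp
  have w3: "concat (v # vs) = us @ concat ys" using h(2) zs by simp
  have "FF b v \<le> FF b us" by (rule lemV[OF b w1 w2 w3 usn])
  moreover have "GG b u < FF b v" using zv zs unfolding valid_def by simp
  ultimately have sep: "GG b u < FF b us" by simp
  have un: "u \<noteq> []" using zv unfolding valid_def wcl_def by simp
  have "FF b (u @ us) > FF b u"
    unfolding FF_app FF_def[of b u]
    by (rule alg_A) (use un usn sep in \<open>auto simp: FF_def GG_def\<close>)
  moreover have wlw: "wcl b w" using yv unfolding valid_def by simp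
  have "w = [] @ u @ us" using h(1) by simp
  then have "FF b w \<le> FF b u" using wclD[OF wlw _ un] by blast
  ultimately show False using h(1) by simp
qed

lemma uniq_list:
  assumes b: "b > 0"
  shows "valid b zs \<Longrightarrow> valid b ys \<Longrightarrow> concat zs = concat ys \<Longrightarrow> zs = ys"
proof (induction zs arbitrary: ys)
  case Nil
  have "\<forall>w\<in>set ys. w \<noteq> []" using Nil.prems(2) unfolding valid_def wcl_def by blast
  moreover have "concat ys = []" using Nil.prems(3) by simp
  ultimately show ?case by (cases ys) auto
next
  case (Cons u zs)
  have un: "u \<noteq> []" using Cons.prems(1) unfolding valid_def wcl_def by simp
  have "ys \<noteq> []" using Cons.prems(3) un by auto
  then obtain w ys' where ys: "ys = w # ys'" by (cases ys) auto
  have eq: "u @ concat zs = w @ concat ys'" using Cons.prems ys by simp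
  have "\<not> length u < length w" using not_shorter[OF b _ _ eq] Cons.prems(1,2) ys by simp
  moreover have "\<not> length w < length u" using not_shorter[OF b _ _ eq[symmetric]] Cons.prems(1,2) ys by simp
  ultimately have "length u = length w" by simp
  then have "u = w" "concat zs = concat ys'" using eq by auto
  moreover have "valid b zs" "valid b ys'" using Cons.prems ys unfolding valid_def by auto
  ultimately show ?case using Cons.IH ys by blast
qed


lemma Bz_mset: "Bz b (mset s) = {FF b s .. GG b s}"
  unfolding Bz_def Bk_def center_def FF_def GG_def by (simp add: sum_mset_sum_list)

lemma sub_iff: "b \<ge> 0 \<Longrightarrow> {FF b s .. GG b s} \<subseteq> {FF b w .. GG b w} \<longleftrightarrow> FF b w \<le> FF b s \<and> GG b s \<le> GG b w"
  using FF_le_GG[of b s] by auto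

lemma infix_take_drop:
  assumes "p \<le> q" "q < length w"
  shows "w = take p w @ take (q - p + 1) (drop p w) @ drop (q + 1) w"
    and "take (q - p + 1) (drop p w) \<noteq> []"
proof -
  have "drop p w = take (q - p + 1) (drop p w) @ drop (q - p + 1) (drop p w)"
    by (rule append_take_drop_id[symmetric])
  moreover have "drop (q - p + 1) (drop p w) = drop (q + 1) w"
  proof -
    have "(q - p + 1) + p = q + 1" using assms by simp
    then show ?thesis by (simp only: drop_drop)
  qed
  ultimately have "drop p w = take (q - p + 1) (drop p w) @ drop (q + 1) w" by metis
  then show "w = take p w @ take (q - p + 1) (drop p w) @ drop (q + 1) w"
    by (metis append_take_drop_id)
  show "take (q - p + 1) (drop p w) \<noteq> []" using assms by simp
qed

lemma wc_iff:
  assumes b: "b > 0" and srt: "sorted w" and wn: "w \<noteq> []"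
  shows "well_contained b (mset w) \<longleftrightarrow> wcl b w"
proof -
  have sl: "sorted_list_of_multiset (mset w) = w" using srt by (simp add: sorted_sort_id)
  have wc: "well_contained b (mset w) \<longleftrightarrow>
      (\<forall>p q. p \<le> q \<and> q < length w \<longrightarrow> Bz b (mset (take (q - p + 1) (drop p w))) \<subseteq> Bz b (mset w))"
    unfolding well_contained_def consecutive_subsets_def sl by auto
  show ?thesis
  proof
    assume h: "well_contained b (mset w)"
    show "wcl b w"
    proof (rule wclI[OF wn])
      fix a s c assume e: "w = a @ s @ c" and sn: "s \<noteq> []"
      define p where "p = length a"
      define q where "q = length a + length s - 1"
      have pq: "p \<le> q" "q < length w" using sn e unfolding p_def q_def by (cases s; auto)+
      have "take (q - p + 1) (drop p w) = s" using sn e unfolding p_def q_def by (cases s) auto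
      then have "Bz b (mset s) \<subseteq> Bz b (mset w)" using h pq unfolding wc by metis
      then show "FF b w \<le> FF b s \<and> GG b s \<le> GG b w" unfolding Bz_mset using sub_iff b by simp
    qed
  next
    assume h: "wcl b w"
    show "well_contained b (mset w)" unfolding wc
    proof (intro allI impI)
      fix p q assume pq: "p \<le> q \<and> q < length w"
      note it = infix_take_drop[of p q w]
      have "FF b w \<le> FF b (take (q - p + 1) (drop p w)) \<and> GG b (take (q - p + 1) (drop p w)) \<le> GG b w"
        using wclD[OF h it(1) it(2)] pq by simp
      then show "Bz b (mset (take (q - p + 1) (drop p w))) \<subseteq> Bz b (mset w)"
        unfolding Bz_mset using sub_iff b by simp
    qed
  qed
qed

lemma sorted_block: "sorted (concat ys) \<Longrightarrow> w \<in> set ys \<Longrightarrow> sorted w"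
proof -
  assume s: "sorted (concat ys)" and w: "w \<in> set ys"
  obtain as cs where "ys = as @ w # cs" using split_list[OF w] by blast
  then have "sorted (concat as @ w @ concat cs)" using s by simp
  then show "sorted w" by (simp add: sorted_append)
qed

lemma sorted_concat_valid:
  assumes b: "b \<ge> 0"
  shows "(\<forall>l\<in>set ls. wcl b l \<and> sorted l) \<Longrightarrow> sorted_wrt (\<lambda>u v. GG b u < FF b v) ls \<Longrightarrow> sorted (concat ls)"
proof (induction ls)
  case Nil then show ?case by simp
next
  case (Cons l ls)
  have "\<forall>x\<in>set l. \<forall>y\<in>set (concat ls). x \<le> y"
  proof (intro ballI)
    fix x y assume x: "x \<in> set l" and y: "y \<in> set (concat ls)"
    then obtain l' where l': "l' \<in> set ls" "y \<in> set l'" by auto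
    have "x \<le> GG b l" using wcl_mem[OF b _ x] Cons.prems by simp
    also have "GG b l < FF b l'" using Cons.prems(2) l' by simp
    also have "FF b l' \<le> y" using wcl_mem[OF b _ l'(2)] Cons.prems l' by simp
    finally show "x \<le> y" by simp
  qed
  then show ?case using Cons by (simp add: sorted_append)
qed

theorem lemma4p2:
  fixes b :: real and k :: nat and z :: "real multiset"
  assumes "b > 0" and "size z = k"
  shows "\<exists>!zs :: real multiset list.
           sum_list zs = z
         \<and> (\<forall>zi \<in> set zs. zi \<noteq> {#} \<and> well_contained b zi)
         \<and> (\<forall>i j. i < j \<and> j < length zs \<longrightarrow>
                 Bz b (zs ! i) \<inter> Bz b (zs ! j) = {} \<and> interval_less (Bz b (zs ! i)) (Bz b (zs ! j)))"
proof -
  have b: "b > 0" by fact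
  define xs where "xs = sorted_list_of_multiset z"
  have sx: "sorted xs" and mx: "mset xs = z" unfolding xs_def by simp_all
  define zs0 where "zs0 = map (\<lambda>x. [x]) xs"
  have "concat zs0 = xs" unfolding zs0_def by (induction xs) auto
  moreover have "\<forall>w\<in>set zs0. wcl b w" unfolding zs0_def using wcl_single by auto
  ultimately obtain ys where ys: "concat ys = xs" "valid b ys"
    using exist_list[OF b, of zs0] sx by auto
  have ysw: "\<forall>w\<in>set ys. wcl b w" and yss: "sorted_wrt (\<lambda>u v. GG b u < FF b v) ys"
    using ys(2) unfolding valid_def by auto
  have ysn: "\<forall>w\<in>set ys. w \<noteq> []" using ysw unfolding wcl_def by auto
  have ysorted: "\<forall>w\<in>set ys. sorted w" using sorted_block ys(1) sx by blast
  show ?thesis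
  proof (rule ex1I[of _ "map mset ys"])
    show "sum_list (map mset ys) = z
         \<and> (\<forall>zi \<in> set (map mset ys). zi \<noteq> {#} \<and> well_contained b zi)
         \<and> (\<forall>i j. i < j \<and> j < length (map mset ys) \<longrightarrow>
                 Bz b (map mset ys ! i) \<inter> Bz b (map mset ys ! j) = {} \<and>
                 interval_less (Bz b (map mset ys ! i)) (Bz b (map mset ys ! j)))"
    proof (intro conjI allI impI ballI)
      show "sum_list (map mset ys) = z" using ys(1) mx by (simp add: mset_concat[symmetric])
    next
      fix zi assume "zi \<in> set (map mset ys)"
      then obtain w where w: "w \<in> set ys" "zi = mset w" by auto
      show "zi \<noteq> {#}" using w ysn by simp
      show "well_contained b zi" using w wc_iff[OF b] ysn ysorted ysw by simp
    next
      fix i j assume ij: "i < j \<and> j < length (map mset ys)"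
      then have lt: "GG b (ys ! i) < FF b (ys ! j)" using sorted_wrt_nth_less[OF yss] by simp
      have e: "Bz b (map mset ys ! i) = {FF b (ys!i) .. GG b (ys!i)}"
              "Bz b (map mset ys ! j) = {FF b (ys!j) .. GG b (ys!j)}"
        using ij by (simp_all add: Bz_mset)
      show "Bz b (map mset ys ! i) \<inter> Bz b (map mset ys ! j) = {}" unfolding e using lt by auto
      show "interval_less (Bz b (map mset ys ! i)) (Bz b (map mset ys ! j))"
        unfolding e interval_less_def using lt by auto
    qed
  next
    fix ms :: "real multiset list"
    assume P: "sum_list ms = z
         \<and> (\<forall>zi \<in> set ms. zi \<noteq> {#} \<and> well_contained b zi)
         \<and> (\<forall>i j. i < j \<and> j < length ms \<longrightarrow>
                 Bz b (ms ! i) \<inter> Bz b (ms ! j) = {} \<and> interval_less (Bz b (ms ! i)) (Bz b (ms ! j)))"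
    define ls where "ls = map sorted_list_of_multiset ms"
    have msl: "ms = map mset ls" unfolding ls_def by (induction ms) auto
    have lsorted: "\<forall>l\<in>set ls. sorted l" unfolding ls_def by auto
    have lw: "\<forall>l\<in>set ls. wcl b l"
    proof
      fix l assume l: "l \<in> set ls"
      then obtain zi where zi: "zi \<in> set ms" "l = sorted_list_of_multiset zi" unfolding ls_def by auto
      have zn: "zi \<noteq> {#}" "well_contained b zi" using P[THEN conjunct2, THEN conjunct1] zi(1) by blast+
      have ml: "mset l = zi" using zi by simp
      have "l \<noteq> []" using ml zn by (cases l) auto
      moreover have "sorted l" using lsorted l by blast
      ultimately have "well_contained b (mset l) \<longleftrightarrow> wcl b l" using wc_iff[OF b] by blast
      then show "wcl b l" using ml zn by simp
    qed
    have lso: "sorted_wrt (\<lambda>u v. GG b u < FF b v) ls"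
      unfolding sorted_wrt_iff_nth_less
    proof (intro allI impI)
      fix i j assume ij: "i < j" "j < length ls"
      have P3: "\<forall>i j. i < j \<and> j < length ms \<longrightarrow>
                 Bz b (ms ! i) \<inter> Bz b (ms ! j) = {} \<and> interval_less (Bz b (ms ! i)) (Bz b (ms ! j))"
        using P[THEN conjunct2, THEN conjunct2] .
      have "j < length ms" using ij unfolding ls_def by simp
      then have "interval_less (Bz b (ms ! i)) (Bz b (ms ! j))" using P3 ij(1) by blast
      moreover have "ms ! i = mset (ls ! i)" "ms ! j = mset (ls ! j)"
        using ij \<open>j < length ms\<close> by (simp_all add: ls_def)
      ultimately have il: "interval_less {FF b (ls!i) .. GG b (ls!i)} {FF b (ls!j) .. GG b (ls!j)}"
        by (simp only: Bz_mset)
      have "FF b (ls!i) \<le> GG b (ls!i)" "FF b (ls!j) \<le> GG b (ls!j)"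
        using FF_le_GG[of b] b by auto
      then have "GG b (ls!i) \<in> {FF b (ls!i) .. GG b (ls!i)}" "FF b (ls!j) \<in> {FF b (ls!j) .. GG b (ls!j)}"
        by auto
      then show "GG b (ls ! i) < FF b (ls ! j)" using il unfolding interval_less_def by blast
    qed
    have "sorted (concat ls)" using sorted_concat_valid[of b ls] b lw lsorted lso by auto
    moreover have "mset (concat ls) = z" using P[THEN conjunct1] msl by (simp add: mset_concat)
    ultimately have "concat ls = xs"
    proof -
      assume s1: "sorted (concat ls)" and m1: "mset (concat ls) = z"
      have "concat ls = sort (concat ls)" using s1 by (simp add: sorted_sort_id)
      also have "\<dots> = sorted_list_of_multiset (mset (concat ls))" by simp
      also have "\<dots> = xs" unfolding xs_def m1 ..
      finally show ?thesis .
    qed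
    then have cc: "concat ls = concat ys" using ys(1) by simp
    have "valid b ls" unfolding valid_def using lw lso by blast
    then have "ls = ys" using uniq_list[OF b _ ys(2) cc] by blast
    then show "ms = map mset ys" using msl by simp
  qed
qed

end
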